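(* Let $n$ be a nonnegative integer and let $x$ be a complex number such that no denominator below vanishes. Then \[ \sum_{k=0}^{n}(-1)^k\binom{n}{k} \frac{\binom{\frac{x}{2}+k}{k}\binom{x-\frac{1}{2}+k}{k}}{\binom{\frac{x-1}{2}+k}{k}\binom{x-\frac{1}{2}+n+k}{k}}H_{2k}(x) =4^{n-1}\frac{\binom{\frac{x}{2}-\frac{1}{4}+n}{n}\binom{-\frac{3}{4}+n}{n}}{\binom{\frac{x-1}{2}+n}{n}\binom{x-\frac{1}{2}+2n}{n}} \big\{H_n(\tfrac{x-1}{2})-H_n(-\tfrac{3}{4})\big\} +4^{n-1}\frac{\binom{\frac{x}{2}-\frac{3}{4}+n}{n}\binom{-\frac{5}{4}+n}{n}}{\binom{\frac{x-1}{2}+n}{n}\binom{x-\frac{1}{2}+2n}{n}} \big\{H_n(\tfrac{x-1}{2})-H_n(-\tfrac{5}{4})\big\}. \]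
   Context: For complex $z$ and a nonnegative integer $k$, $\binom{z}{k}=\frac{z(z-1)\cdots(z-k+1)}{k!}$ (with $\binom{z}{0}=1$). For complex $x$ and nonnegative integer $m$, $H_0(x)=0$ and $H_m(x)=\sum_{j=1}^m\frac{1}{x+j}$ for $m\ge1$. The parameter $x$ is assumed to be such that all denominators are nonzero. *)

theory Defs
  imports Complex_Main
begin

definition H :: "nat \<Rightarrow> complex \<Rightarrow> complex" where
  "H m x = (\<Sum>j=1..m. 1 / (x + of_nat j))"

end

theory Submission
  imports Defs
begin


lemma poch_shift: "(a::complex) * pochhammer (a+1) k = pochhammer a k * (a + of_nat k)"
  by (metis pochhammer_Suc pochhammer_rec)

definition tt :: "complex \<Rightarrow> complex \<Rightarrow> nat \<Rightarrow> nat \<Rightarrow> complex" where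
 "tt c u n k = pochhammer (- of_nat n) k * pochhammer (c+1-u) k * pochhammer c k /
     (fact k * pochhammer u k * pochhammer (c + 1 + of_nat n) k)"

definition GG :: "complex \<Rightarrow> complex \<Rightarrow> nat \<Rightarrow> nat \<Rightarrow> complex" where
 "GG c u n k = (if k = 0 then 0 else pochhammer (- of_nat n - 1) k * pochhammer (c+1-u) k * pochhammer c k /
     (fact (k-1) * pochhammer u (k-1) * pochhammer (c + 1 + of_nat n) k))"

definition XX :: "complex \<Rightarrow> complex \<Rightarrow> nat \<Rightarrow> nat \<Rightarrow> complex" where
 "XX c u n k = pochhammer (- of_nat n - 1) k * pochhammer (c+1-u) k * pochhammer c k /
     (fact k * pochhammer u k * pochhammer (c + 2 + of_nat n) k)"

lemma tt_Suc: "tt c u (Suc n) k = XX c u n k"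
proof -
  have "- of_nat (Suc n) = (- of_nat n - 1 :: complex)" by simp
  moreover have "c + 1 + of_nat (Suc n) = c + 2 + of_nat n" by simp
  ultimately show ?thesis unfolding tt_def XX_def by (simp only:)
qed

lemma lin1: "(- of_nat n - 1 :: complex) * P0 = P1 * (- of_nat n - 1 + of_nat k) \<Longrightarrow> (of_nat n + 1) * P0 = (of_nat n + 1 - of_nat k) * P1"
  by (simp add: algebra_simps)

lemma tt_X:
  assumes "c + 1 + of_nat n \<noteq> 0" "c + 1 + of_nat n + of_nat k \<noteq> 0" and p2: "pochhammer (c + 2 + of_nat n) k \<noteq> 0"
  shows "tt c u n k = XX c u n k * ((of_nat n + 1 - of_nat k) * (c + 1 + of_nat n + of_nat k) / ((of_nat n + 1) * (c + 1 + of_nat n)))"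
proof -
  have h: "(- of_nat n - 1 :: complex) * pochhammer (- of_nat n) k = pochhammer (- of_nat n - 1) k * (- of_nat n - 1 + of_nat k)"
    using poch_shift[of "- of_nat n - 1" k] by simp
  have e1: "(of_nat n + 1 :: complex) * pochhammer (- of_nat n) k = (of_nat n + 1 - of_nat k) * pochhammer (- of_nat n - 1) k"
    by (rule lin1[OF h])
  have e2: "pochhammer (c + 1 + of_nat n) k * (c + 1 + of_nat n + of_nat k) = (c + 1 + of_nat n) * pochhammer (c + 2 + of_nat n) k"
    using poch_shift[of "c + 1 + of_nat n" k] by (simp add: algebra_simps)
  have n1: "(of_nat n + 1 :: complex) \<noteq> 0" by (metis of_nat_Suc of_nat_neq_0 add.commute)
  have e1': "pochhammer (- of_nat n :: complex) k = (of_nat n + 1 - of_nat k) * pochhammer (- of_nat n - 1) k / (of_nat n + 1)"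
    using e1 n1 by (simp add: field_simps)
  have e2': "pochhammer (c + 1 + of_nat n) k = (c + 1 + of_nat n) * pochhammer (c + 2 + of_nat n) k / (c + 1 + of_nat n + of_nat k)"
    using e2 assms by (simp add: field_simps)
  show ?thesis unfolding tt_def XX_def e1' e2' using assms n1 p2
    by (simp add: field_simps)
qed

lemma absGX:
  fixes Q PA PC F Pu W a b d kk :: complex
  assumes "F \<noteq> 0" "W \<noteq> 0" "a \<noteq> 0" "b \<noteq> 0" "d \<noteq> 0" "kk \<noteq> 0"
  shows "Q*PA*PC/(F*Pu*(a*W/b)) = Q*PA*PC/((kk*F)*(Pu*d)*W) * (kk*d*b/a)"
  using assms by (cases "Pu = 0") (simp_all add: field_simps)

lemma GG_X:
  assumes a: "c + 1 + of_nat n \<noteq> 0" and b: "c + 1 + of_nat n + of_nat k \<noteq> 0" and p2: "pochhammer (c + 2 + of_nat n) k \<noteq> 0"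
    and uk: "k > 0 \<Longrightarrow> u + of_nat k - 1 \<noteq> 0"
  shows "GG c u n k = XX c u n k * (of_nat k * (u + of_nat k - 1) * (c + 1 + of_nat n + of_nat k) / (c + 1 + of_nat n))"
proof (cases k)
  case 0 then show ?thesis by (simp add: GG_def)
next
  case (Suc m)
  have e2: "pochhammer (c + 1 + of_nat n) k * (c + 1 + of_nat n + of_nat k) = (c + 1 + of_nat n) * pochhammer (c + 2 + of_nat n) k"
    using poch_shift[of "c + 1 + of_nat n" k] by (simp add: algebra_simps)
  have e2': "pochhammer (c + 1 + of_nat n) k = (c + 1 + of_nat n) * pochhammer (c + 2 + of_nat n) k / (c + 1 + of_nat n + of_nat k)"
    using e2 b by (simp add: field_simps)
  have km: "u + of_nat k - 1 = u + of_nat m" using Suc by simp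
  have um: "u + of_nat m \<noteq> 0" using uk Suc km by simp
  have pu: "pochhammer u k = pochhammer u m * (u + of_nat m)" using Suc by (simp add: pochhammer_Suc)
  have fk: "(fact k :: complex) = of_nat k * fact m" using Suc by simp
  have GGk: "GG c u n k = pochhammer (- of_nat n - 1) k * pochhammer (c+1-u) k * pochhammer c k /
     (fact m * pochhammer u m * pochhammer (c + 1 + of_nat n) k)" using Suc by (simp add: GG_def)
  have kn0: "(of_nat k :: complex) \<noteq> 0" using Suc of_nat_eq_0_iff nat.distinct(1) by metis
  show ?thesis unfolding GGk XX_def e2' fk pu km
    by (rule absGX) (use a b p2 um kn0 in auto)
qed

lemma absGS:
  fixes Q PA PC F Pu W a q1 q2 q3 :: complex
  assumes "a \<noteq> 0" "W \<noteq> 0"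
  shows "(Q*q1)*(PA*q2)*(PC*q3)/(F*Pu*(a*W)) = Q*PA*PC/(F*Pu*W) * (q1*q2*q3/a)"
  using assms by (simp add: field_simps)

lemma GG_Suc_X:
  assumes "c + 1 + of_nat n \<noteq> 0" and p2: "pochhammer (c + 2 + of_nat n) k \<noteq> 0"
  shows "GG c u n (Suc k) = XX c u n k * ((- of_nat n - 1 + of_nat k) * (c + 1 - u + of_nat k) * (c + of_nat k) / (c + 1 + of_nat n))"
proof -
  have r: "pochhammer (c + 1 + of_nat n) (Suc k) = (c + 1 + of_nat n) * pochhammer (c + 2 + of_nat n) k"
    by (simp add: pochhammer_rec algebra_simps)
  have GGs: "GG c u n (Suc k) = (pochhammer (- of_nat n - 1) k * (- of_nat n - 1 + of_nat k)) *
      (pochhammer (c+1-u) k * (c+1-u + of_nat k)) * (pochhammer c k * (c + of_nat k)) /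
     (fact k * pochhammer u k * ((c + 1 + of_nat n) * pochhammer (c + 2 + of_nat n) k))"
    unfolding GG_def r by (simp only: pochhammer_Suc diff_Suc_1 nat.distinct if_False)
  show ?thesis unfolding GGs XX_def by (rule absGS) (use assms in auto)
qed

definition rhoI :: "complex \<Rightarrow> complex \<Rightarrow> complex \<Rightarrow> complex" where
  "rhoI c u N = (1 + c + N) * (2*u - c + 2*N) / ((2 + c + 2*N) * (u + N))"
definition gamI :: "complex \<Rightarrow> complex \<Rightarrow> complex \<Rightarrow> complex" where
  "gamI c u N = - (c + 1 + N) / ((2 + c + 2*N) * (u + N) * (N + 1))"

lemma keyI:
  fixes c u N K :: complex
  assumes "N + 1 \<noteq> 0" "c + 1 + N \<noteq> 0" "2 + c + 2*N \<noteq> 0" "u + N \<noteq> 0"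
  shows "1 - rhoI c u N * ((N + 1 - K) * (c + 1 + N + K) / ((N + 1) * (c + 1 + N)))
     = gamI c u N * ((K - N - 1) * (c + 1 - u + K) * (c + K) / (c + 1 + N) - K * (u + K - 1) * (c + 1 + N + K) / (c + 1 + N))"
  using assms unfolding rhoI_def gamI_def by (simp add: divide_simps) (simp add: algebra_simps)

definition rhoII :: "complex \<Rightarrow> complex \<Rightarrow> complex \<Rightarrow> complex" where
  "rhoII c u N = (c + 1 + N) * (2*u - c - 1 + 2*N) / ((u + N) * (c + 1 + 2*N))"
definition gamII :: "complex \<Rightarrow> complex \<Rightarrow> complex \<Rightarrow> complex" where
  "gamII c u N = - 2 * (c + 1 + N) / ((1 + c + 2*N) * (u + N) * (N + 1))"

lemma keyII:
  fixes c u N K :: complex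
  assumes "N + 1 \<noteq> 0" "c + 1 + N \<noteq> 0" "1 + c + 2*N \<noteq> 0" "u + N \<noteq> 0"
  shows "(c + 2*K) * (1 - rhoII c u N * ((N + 1 - K) * (c + 1 + N + K) / ((N + 1) * (c + 1 + N))))
     = gamII c u N * ((K + 1 + (c-1)/2) * ((- N - 1 + K) * (c + 1 - u + K) * (c + K) / (c + 1 + N)) - (K + (c-1)/2) * (K * (u + K - 1) * (c + 1 + N + K) / (c + 1 + N)))"
proof -
  have h: "2 * (c + 1 + N) \<noteq> 0" using assms(2) by (simp only: mult_eq_0_iff) simp
  show ?thesis using assms h unfolding rhoII_def gamII_def by (simp add: divide_simps) (simp add: algebra_simps)
qed

lemma keyI':
  fixes c u N K :: complex
  assumes "N + 1 \<noteq> 0" "c + 1 + N \<noteq> 0" "2 + c + 2*N \<noteq> 0" "u + N \<noteq> 0"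
  shows "1 - rhoI c u N * ((N + 1 - K) * (c + 1 + N + K) / ((N + 1) * (c + 1 + N)))
     = gamI c u N * ((- N - 1 + K) * (c + 1 - u + K) * (c + K) / (c + 1 + N) - K * (u + K - 1) * (c + 1 + N + K) / (c + 1 + N))"
  using assms unfolding rhoI_def gamI_def by (simp add: divide_simps) (simp add: algebra_simps)

lemma point_common:
  assumes a: "c + 1 + of_nat n \<noteq> 0" and b: "c + 1 + of_nat n + of_nat k \<noteq> 0" and p2: "pochhammer (c + 2 + of_nat n) k \<noteq> 0"
    and uk: "k > 0 \<Longrightarrow> u + of_nat k - 1 \<noteq> 0"
  shows "tt c u (Suc n) k = XX c u n k"
    "tt c u n k = XX c u n k * ((of_nat n + 1 - of_nat k) * (c + 1 + of_nat n + of_nat k) / ((of_nat n + 1) * (c + 1 + of_nat n)))"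
    "GG c u n k = XX c u n k * (of_nat k * (u + of_nat k - 1) * (c + 1 + of_nat n + of_nat k) / (c + 1 + of_nat n))"
    "GG c u n (Suc k) = XX c u n k * ((- of_nat n - 1 + of_nat k) * (c + 1 - u + of_nat k) * (c + of_nat k) / (c + 1 + of_nat n))"
  using tt_Suc tt_X[OF a b p2] GG_X[OF a b p2 uk] GG_Suc_X[OF a p2] by auto

lemma pointI:
  assumes a: "c + 1 + of_nat n \<noteq> 0" and b: "c + 1 + of_nat n + of_nat k \<noteq> 0" and p2: "pochhammer (c + 2 + of_nat n) k \<noteq> 0"
    and uk: "k > 0 \<Longrightarrow> u + of_nat k - 1 \<noteq> 0" and d: "2 + c + 2 * of_nat n \<noteq> 0" and un: "u + of_nat n \<noteq> 0"
  shows "tt c u (Suc n) k - rhoI c u (of_nat n) * tt c u n k = gamI c u (of_nat n) * (GG c u n (Suc k) - GG c u n k)"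
proof -
  note pc = point_common[OF a b p2 uk]
  have n1: "(of_nat n + 1 :: complex) \<noteq> 0" by (metis of_nat_Suc of_nat_neq_0 add.commute)
  have k: "1 - rhoI c u (of_nat n) * ((of_nat n + 1 - of_nat k) * (c + 1 + of_nat n + of_nat k) / ((of_nat n + 1) * (c + 1 + of_nat n)))
     = gamI c u (of_nat n) * ((- of_nat n - 1 + of_nat k) * (c + 1 - u + of_nat k) * (c + of_nat k) / (c + 1 + of_nat n) - of_nat k * (u + of_nat k - 1) * (c + 1 + of_nat n + of_nat k) / (c + 1 + of_nat n))"
    by (rule keyI') (use n1 a d un in auto)
  have "tt c u (Suc n) k - rhoI c u (of_nat n) * tt c u n k
     = XX c u n k * (1 - rhoI c u (of_nat n) * ((of_nat n + 1 - of_nat k) * (c + 1 + of_nat n + of_nat k) / ((of_nat n + 1) * (c + 1 + of_nat n))))"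
    by (simp only: pc) (simp add: algebra_simps)
  also have "\<dots> = gamI c u (of_nat n) * (GG c u n (Suc k) - GG c u n k)"
    by (simp only: k pc) (simp add: algebra_simps)
  finally show ?thesis .
qed

lemma pointII:
  assumes a: "c + 1 + of_nat n \<noteq> 0" and b: "c + 1 + of_nat n + of_nat k \<noteq> 0" and p2: "pochhammer (c + 2 + of_nat n) k \<noteq> 0"
    and uk: "k > 0 \<Longrightarrow> u + of_nat k - 1 \<noteq> 0" and d: "1 + c + 2 * of_nat n \<noteq> 0" and un: "u + of_nat n \<noteq> 0"
  shows "(c + 2 * of_nat k) * tt c u (Suc n) k - rhoII c u (of_nat n) * ((c + 2 * of_nat k) * tt c u n k)
     = gamII c u (of_nat n) * ((of_nat (Suc k) + (c-1)/2) * GG c u n (Suc k) - (of_nat k + (c-1)/2) * GG c u n k)"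
proof -
  note pc = point_common[OF a b p2 uk]
  have n1: "(of_nat n + 1 :: complex) \<noteq> 0" by (metis of_nat_Suc of_nat_neq_0 add.commute)
  have k: "(c + 2 * of_nat k) * (1 - rhoII c u (of_nat n) * ((of_nat n + 1 - of_nat k) * (c + 1 + of_nat n + of_nat k) / ((of_nat n + 1) * (c + 1 + of_nat n))))
     = gamII c u (of_nat n) * ((of_nat k + 1 + (c-1)/2) * ((- of_nat n - 1 + of_nat k) * (c + 1 - u + of_nat k) * (c + of_nat k) / (c + 1 + of_nat n)) - (of_nat k + (c-1)/2) * (of_nat k * (u + of_nat k - 1) * (c + 1 + of_nat n + of_nat k) / (c + 1 + of_nat n)))"
    by (rule keyII) (use n1 a d un in auto)
  have "(c + 2 * of_nat k) * tt c u (Suc n) k - rhoII c u (of_nat n) * ((c + 2 * of_nat k) * tt c u n k)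
     = XX c u n k * ((c + 2 * of_nat k) * (1 - rhoII c u (of_nat n) * ((of_nat n + 1 - of_nat k) * (c + 1 + of_nat n + of_nat k) / ((of_nat n + 1) * (c + 1 + of_nat n)))))"
    by (simp only: pc) (simp add: algebra_simps)
  also have "\<dots> = gamII c u (of_nat n) * ((of_nat (Suc k) + (c-1)/2) * GG c u n (Suc k) - (of_nat k + (c-1)/2) * GG c u n k)"
    by (simp only: k pc of_nat_Suc) (simp add: algebra_simps)
  finally show ?thesis .
qed



definition gen :: "complex \<Rightarrow> complex \<Rightarrow> nat \<Rightarrow> bool" where
  "gen c u n \<longleftrightarrow> (\<forall>j \<le> 2*n+2. c + of_nat j \<noteq> 0) \<and> (\<forall>j<n. u + of_nat j \<noteq> 0)"

definition Dx :: "complex \<Rightarrow> complex \<Rightarrow> nat \<Rightarrow> complex" where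
  "Dx c u n = pochhammer (1 + c) n * pochhammer (u - c/2) n / (pochhammer (1 + c/2) n * pochhammer u n)"

definition Ex2 :: "complex \<Rightarrow> complex \<Rightarrow> nat \<Rightarrow> complex" where
  "Ex2 c u n = c * pochhammer (c + 1) n * pochhammer (u - c/2 - 1/2) n / (pochhammer u n * pochhammer (c/2 + 1/2) n)"

lemma gen_mono: "gen c u (Suc n) \<Longrightarrow> gen c u n"
  unfolding gen_def by auto

lemma gen_facts:
  assumes "gen c u (Suc n)" "k \<le> Suc n"
  shows "c + 1 + of_nat n \<noteq> 0" "c + 1 + of_nat n + of_nat k \<noteq> 0" "pochhammer (c + 2 + of_nat n) k \<noteq> 0"
    "k > 0 \<Longrightarrow> u + of_nat k - 1 \<noteq> 0" "2 + c + 2 * of_nat n \<noteq> 0" "1 + c + 2 * of_nat n \<noteq> 0" "u + of_nat n \<noteq> 0"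
proof -
  have C: "\<And>j. j \<le> 2*n+4 \<Longrightarrow> c + of_nat j \<noteq> 0" and U: "\<And>j. j < Suc n \<Longrightarrow> u + of_nat j \<noteq> 0"
    using assms(1) unfolding gen_def by auto
  show "c + 1 + of_nat n \<noteq> 0" using C[of "n+1"] by (simp add: algebra_simps)
  show "c + 1 + of_nat n + of_nat k \<noteq> 0" using C[of "n+1+k"] assms(2) by (simp add: algebra_simps)
  show "pochhammer (c + 2 + of_nat n) k \<noteq> 0"
  proof
    assume "pochhammer (c + 2 + of_nat n) k = 0"
    then obtain i where "i < k" "c + 2 + of_nat n = - of_nat i" by (auto simp: pochhammer_eq_0_iff)
    have "c + of_nat (n + 2 + i) = (c + 2 + of_nat n) + of_nat i" by (simp add: algebra_simps)
    with \<open>c + 2 + of_nat n = - of_nat i\<close> have "c + of_nat (n + 2 + i) = 0" by simp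
    moreover have "n + 2 + i \<le> 2*n+4" using \<open>i < k\<close> assms(2) by simp
    ultimately show False using C by blast
  qed
  show "k > 0 \<Longrightarrow> u + of_nat k - 1 \<noteq> 0"
  proof -
    assume "k > 0"
    then have "u + of_nat k - 1 = u + of_nat (k - 1)" by (simp add: of_nat_diff)
    moreover have "k - 1 < Suc n" using assms(2) \<open>k>0\<close> by simp
    ultimately show ?thesis using U[of "k-1"] by metis
  qed
  show "2 + c + 2 * of_nat n \<noteq> 0" using C[of "2*n+2"] by (simp add: algebra_simps)
  show "1 + c + 2 * of_nat n \<noteq> 0" using C[of "2*n+1"] by (simp add: algebra_simps)
  show "u + of_nat n \<noteq> 0" using U[of n] by simp
qed

lemma tt_top: "tt c u n (Suc n) = 0"
  unfolding tt_def by (simp add: pochhammer_of_nat_eq_0_lemma)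

lemma GG_top: "GG c u n (Suc (Suc n)) = 0"
proof -
  have eq: "(- of_nat n - 1 :: complex) = - of_nat (Suc n)" by simp
  have "pochhammer (- of_nat (Suc n) :: complex) (Suc (Suc n)) = 0"
    by (rule pochhammer_of_nat_eq_0_lemma) simp
  then have "pochhammer (- of_nat n - 1 :: complex) (Suc (Suc n)) = 0"
    by (subst eq)
  then show ?thesis unfolding GG_def by simp
qed

lemma GG_0: "GG c u n 0 = 0" unfolding GG_def by simp

lemma absRatio:
  fixes P1 P2 P3 P4 a b d e r :: complex
  assumes "P3 \<noteq> 0" "P4 \<noteq> 0" "d \<noteq> 0" "e \<noteq> 0" "a * b / (d * e) = r"
  shows "(P1 * a) * (P2 * b) / ((P3 * d) * (P4 * e)) = r * (P1 * P2 / (P3 * P4))"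
  using assms by (auto simp: field_simps)

lemma absRatio3:
  fixes P1 P2 P3 P4 a b d e r c :: complex
  assumes "P3 \<noteq> 0" "P4 \<noteq> 0" "d \<noteq> 0" "e \<noteq> 0" "a * b / (d * e) = r"
  shows "c * (P1 * a) * (P2 * b) / ((P3 * d) * (P4 * e)) = r * (c * P1 * P2 / (P3 * P4))"
  using assms by (auto simp: field_simps)

lemma Dx_Suc:
  assumes "2 + c + 2 * of_nat n \<noteq> 0" "u + of_nat n \<noteq> 0" "pochhammer (1 + c/2) n \<noteq> 0" "pochhammer u n \<noteq> 0"
  shows "Dx c u (Suc n) = rhoI c u (of_nat n) * Dx c u n"
proof -
  have h: "1 + c/2 + of_nat n \<noteq> 0" using assms(1) by (simp add: field_simps)
  have r: "(1 + c + of_nat n) * (u - c/2 + of_nat n) / ((1 + c/2 + of_nat n) * (u + of_nat n)) = rhoI c u (of_nat n)"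
    unfolding rhoI_def using assms h by (simp add: divide_simps) (simp add: algebra_simps)
  show ?thesis unfolding Dx_def pochhammer_Suc
    by (rule absRatio) (use assms h r in auto)
qed

lemma Ex_Suc:
  assumes "1 + c + 2 * of_nat n \<noteq> 0" "u + of_nat n \<noteq> 0" "pochhammer (c/2 + 1/2) n \<noteq> 0" "pochhammer u n \<noteq> 0"
  shows "Ex2 c u (Suc n) = rhoII c u (of_nat n) * Ex2 c u n"
proof -
  have h: "c/2 + 1/2 + of_nat n \<noteq> 0" using assms(1) by (simp add: field_simps)
  have h2: "2 * (1 + c + 2 * of_nat n) \<noteq> 0" using assms(1) by (simp only: mult_eq_0_iff) simp
  have r: "(c + 1 + of_nat n) * (u - c/2 - 1/2 + of_nat n) / ((u + of_nat n) * (c/2 + 1/2 + of_nat n)) = rhoII c u (of_nat n)"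
    unfolding rhoII_def using assms h h2 by (simp add: divide_simps) (simp add: algebra_simps)
  show ?thesis unfolding Ex2_def pochhammer_Suc
    by (rule absRatio3) (use assms h r in auto)
qed

lemma gen_poch:
  assumes "gen c u n"
  shows "pochhammer (1 + c/2) n \<noteq> 0" "pochhammer (c/2 + 1/2) n \<noteq> 0" "pochhammer u n \<noteq> 0"
proof -
  have C: "\<And>j. j \<le> 2*n+2 \<Longrightarrow> c + of_nat j \<noteq> 0" and U: "\<And>j. j < n \<Longrightarrow> u + of_nat j \<noteq> 0"
    using assms unfolding gen_def by auto
  show "pochhammer (1 + c/2) n \<noteq> 0"
  proof
    assume "pochhammer (1 + c/2) n = 0"
    then obtain i where i: "i < n" "1 + c/2 = - of_nat i" by (auto simp: pochhammer_eq_0_iff)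
    have "c + of_nat (2 + 2*i) = 2 * (1 + c/2) + 2 * of_nat i" by (simp add: algebra_simps)
    also have "\<dots> = 0" using i by simp
    finally show False using C[of "2+2*i"] i by simp
  qed
  show "pochhammer (c/2 + 1/2) n \<noteq> 0"
  proof
    assume "pochhammer (c/2 + 1/2) n = 0"
    then obtain i where i: "i < n" "c/2 + 1/2 = - of_nat i" by (auto simp: pochhammer_eq_0_iff)
    have "c + of_nat (1 + 2*i) = 2 * (c/2 + 1/2) + 2 * of_nat i" by (simp add: algebra_simps)
    also have "\<dots> = 0" using i by simp
    finally show False using C[of "1+2*i"] i by simp
  qed
  show "pochhammer u n \<noteq> 0"
  proof
    assume "pochhammer u n = 0"
    then obtain i where i: "i < n" "u = - of_nat i" by (auto simp: pochhammer_eq_0_iff)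
    then show False using U[of i] by simp
  qed
qed

lemma sumI: "gen c u n \<Longrightarrow> (\<Sum>k=0..n. tt c u n k) = Dx c u n"
proof (induction n)
  case 0
  then show ?case by (simp add: tt_def Dx_def)
next
  case (Suc n)
  note g = Suc.prems
  have IH: "(\<Sum>k=0..n. tt c u n k) = Dx c u n" using Suc.IH gen_mono[OF g] by blast
  have pt: "tt c u (Suc n) k = rhoI c u (of_nat n) * tt c u n k + gamI c u (of_nat n) * (GG c u n (Suc k) - GG c u n k)"
    if "k \<in> {0..Suc n}" for k
  proof -
    have kk: "k \<le> Suc n" using that by simp
    note gf = gen_facts[OF g kk]
    show ?thesis using pointI[OF gf(1) gf(2) gf(3) gf(4) gf(5) gf(7)] by (simp add: algebra_simps)
  qed
  have "(\<Sum>k=0..Suc n. tt c u (Suc n) k) = (\<Sum>k=0..Suc n. rhoI c u (of_nat n) * tt c u n k + gamI c u (of_nat n) * (GG c u n (Suc k) - GG c u n k))"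
    by (rule sum.cong) (use pt in auto)
  also have "\<dots> = rhoI c u (of_nat n) * (\<Sum>k=0..Suc n. tt c u n k) + gamI c u (of_nat n) * (\<Sum>k=0..Suc n. GG c u n (Suc k) - GG c u n k)"
    by (simp only: sum.distrib sum_distrib_left)
  also have "(\<Sum>k=0..Suc n. GG c u n (Suc k) - GG c u n k) = 0"
    by (subst sum_Suc_diff) (simp_all add: GG_top GG_0)
  also have "(\<Sum>k=0..Suc n. tt c u n k) = Dx c u n"
    using IH by (simp add: sum.atLeast0_atMost_Suc tt_top)
  also have "rhoI c u (of_nat n) * Dx c u n + gamI c u (of_nat n) * 0 = Dx c u (Suc n)"
    using Dx_Suc[OF gen_facts(5)[OF g le0] gen_facts(7)[OF g le0] gen_poch(1)[OF gen_mono[OF g]] gen_poch(3)[OF gen_mono[OF g]]]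
    by simp
  finally show ?case .
qed

lemma sumII: "gen c u n \<Longrightarrow> (\<Sum>k=0..n. (c + 2 * of_nat k) * tt c u n k) = Ex2 c u n"
proof (induction n)
  case 0
  then show ?case by (simp add: tt_def Ex2_def)
next
  case (Suc n)
  note g = Suc.prems
  have IH: "(\<Sum>k=0..n. (c + 2 * of_nat k) * tt c u n k) = Ex2 c u n" using Suc.IH gen_mono[OF g] by blast
  define HH where "HH k = (of_nat k + (c-1)/2) * GG c u n k" for k
  have pt: "(c + 2 * of_nat k) * tt c u (Suc n) k = rhoII c u (of_nat n) * ((c + 2 * of_nat k) * tt c u n k) + gamII c u (of_nat n) * (HH (Suc k) - HH k)"
    if "k \<in> {0..Suc n}" for k
  proof -
    have kk: "k \<le> Suc n" using that by simp
    note gf = gen_facts[OF g kk]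
    show ?thesis using pointII[OF gf(1) gf(2) gf(3) gf(4) gf(6) gf(7)] unfolding HH_def by (simp add: algebra_simps)
  qed
  have "(\<Sum>k=0..Suc n. (c + 2 * of_nat k) * tt c u (Suc n) k) = (\<Sum>k=0..Suc n. rhoII c u (of_nat n) * ((c + 2 * of_nat k) * tt c u n k) + gamII c u (of_nat n) * (HH (Suc k) - HH k))"
    by (rule sum.cong) (use pt in auto)
  also have "\<dots> = rhoII c u (of_nat n) * (\<Sum>k=0..Suc n. (c + 2 * of_nat k) * tt c u n k) + gamII c u (of_nat n) * (\<Sum>k=0..Suc n. HH (Suc k) - HH k)"
    by (simp only: sum.distrib sum_distrib_left)
  also have "(\<Sum>k=0..Suc n. HH (Suc k) - HH k) = 0"
    by (subst sum_Suc_diff) (simp_all add: HH_def GG_top GG_0)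
  also have "(\<Sum>k=0..Suc n. (c + 2 * of_nat k) * tt c u n k) = Ex2 c u n"
    using IH by (simp add: sum.atLeast0_atMost_Suc tt_top)
  also have "rhoII c u (of_nat n) * Ex2 c u n + gamII c u (of_nat n) * 0 = Ex2 c u (Suc n)"
    using Ex_Suc[OF gen_facts(6)[OF g le0] gen_facts(7)[OF g le0] gen_poch(2)[OF gen_mono[OF g]] gen_poch(3)[OF gen_mono[OF g]]]
    by simp
  finally show ?case .
qed



definition SS :: "complex \<Rightarrow> complex \<Rightarrow> nat \<Rightarrow> complex" where
  "SS c u n = (\<Sum>k=0..n. pochhammer (- of_nat n) k * pochhammer (c+1-u) k * pochhammer c k /
     (fact k * pochhammer u k * pochhammer (c + of_nat n) k))"

definition CC :: "complex \<Rightarrow> complex \<Rightarrow> nat \<Rightarrow> complex" where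
  "CC c u n = 4^n / 2 * (pochhammer (c/2 + 1/2) n * pochhammer (u - c/2) n + pochhammer (c/2) n * pochhammer (u - c/2 - 1/2) n)
     / (pochhammer u n * pochhammer (c + of_nat n) n)"

lemma polyB: "c * pochhammer (c + 1) n * pochhammer (c + of_nat n) n = 4^n * pochhammer (c/2) n * pochhammer (c/2 + 1/2) n * (c + of_nat n)"
  for c :: complex
proof -
  have e1: "c * pochhammer (c + 1) n = pochhammer c n * (c + of_nat n)" by (rule poch_shift)
  have e2: "pochhammer c (2 * n) = pochhammer c n * pochhammer (c + of_nat n) n" unfolding mult_2 by (rule pochhammer_product')
  have e3: "pochhammer (2 * (c/2)) (2 * n) = of_nat (2^(2*n)) * pochhammer (c/2) n * pochhammer (c/2+1/2) n"
    by (rule pochhammer_double)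
  have e4: "(of_nat (2^(2*n)) :: complex) = 4^n" by (simp add: power_mult)
  have e5: "2 * (c/2) = c" by simp
  have "c * pochhammer (c + 1) n * pochhammer (c + of_nat n) n = (pochhammer c n * pochhammer (c + of_nat n) n) * (c + of_nat n)"
    using e1 by (simp only: mult_ac)
  also have "\<dots> = pochhammer c (2 * n) * (c + of_nat n)" by (simp only: e2)
  also have "\<dots> = 4^n * pochhammer (c/2) n * pochhammer (c/2 + 1/2) n * (c + of_nat n)"
    using e3 unfolding e4 e5 by simp
  finally show ?thesis .
qed

lemma polyA: "pochhammer (1 + c) n * pochhammer (c + of_nat n) n * (c + 2 * of_nat n) = 4^n * pochhammer (c/2 + 1/2) n * pochhammer (1 + c/2) n * (c + of_nat n)"
  for c :: complex
proof -
  have e1: "(c + of_nat n) * pochhammer (c + of_nat n + 1) n = pochhammer (c + of_nat n) n * (c + of_nat n + of_nat n)" by (rule poch_shift)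
  have e2: "pochhammer (1 + c) (n + n) = pochhammer (1 + c) n * pochhammer (1 + c + of_nat n) n" by (rule pochhammer_product')
  have e3: "pochhammer (2 * ((1 + c)/2)) (2 * n) = of_nat (2^(2*n)) * pochhammer ((1+c)/2) n * pochhammer ((1+c)/2+1/2) n"
    by (rule pochhammer_double)
  have e4: "(of_nat (2^(2*n)) :: complex) = 4^n" by (simp add: power_mult)
  have e5: "(1 + c)/2 = c/2 + 1/2" "(1+c)/2 + 1/2 = 1 + c/2" "2 * ((1 + c)/2) = 1 + c" "1 + c + of_nat n = c + of_nat n + 1" by (simp_all add: field_simps)
  have "pochhammer (1 + c) n * pochhammer (c + of_nat n) n * (c + 2 * of_nat n)
      = pochhammer (1 + c) n * (pochhammer (c + of_nat n) n * (c + of_nat n + of_nat n))" by (simp add: algebra_simps)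
  also have "\<dots> = pochhammer (1 + c) n * pochhammer (c + of_nat n + 1) n * (c + of_nat n)" unfolding e1[symmetric] by (simp add: algebra_simps)
  also have "\<dots> = pochhammer (1 + c) (2 * n) * (c + of_nat n)" using e2 e5(4) by (simp add: mult_2)
  also have "\<dots> = 4^n * pochhammer (c/2 + 1/2) n * pochhammer (1 + c/2) n * (c + of_nat n)"
    using e3 unfolding e4 e5(1) e5(2) e5(3) by (simp add: add.commute)
  finally show ?thesis .
qed

lemma absCC:
  fixes A1 B F P Q R U V1 V2 m s c :: complex
  assumes pa: "A1*B*m = F*P*Q*s" and pb: "c*A1*B = F*R*P*s"
    and nz: "Q \<noteq> 0" "P \<noteq> 0" "U \<noteq> 0" "B \<noteq> 0" "s \<noteq> 0"
  shows "(m * (A1*V1/(Q*U)) + c*A1*V2/(U*P)) / (2*s) = F/2*(P*V1 + R*V2)/(U*B)"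
proof -
  have t1: "m * (A1*V1/(Q*U)) / (2*s) = F/2*(P*V1)/(U*B)"
    using nz by (simp add: divide_simps) (metis (no_types, lifting) pa mult.commute mult.left_commute)
  have t2: "c*A1*V2/(U*P) / (2*s) = F/2*(R*V2)/(U*B)"
    using nz by (simp add: divide_simps) (metis (no_types, lifting) pb mult.commute mult.left_commute)
  have "(m * (A1*V1/(Q*U)) + c*A1*V2/(U*P)) / (2*s) = m * (A1*V1/(Q*U)) / (2*s) + c*A1*V2/(U*P) / (2*s)"
    by (simp add: add_divide_distrib)
  also have "\<dots> = F/2*(P*V1 + R*V2)/(U*B)" unfolding t1 t2 by (simp add: algebra_simps add_divide_distrib)
  finally show ?thesis .
qed

lemma absT:
  fixes Q F Pu Pcn Pc1n a b :: complex
  assumes "Pcn * b = a * Pc1n" "a \<noteq> 0" "b \<noteq> 0" "Pc1n \<noteq> 0"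
  shows "Q / (F * Pu * Pcn) = Q / (F * Pu * Pc1n) * (b / a)"
proof -
  have e: "Pcn = a * Pc1n / b" using assms by (simp add: field_simps)
  show ?thesis unfolding e using assms by (cases "F * Pu = 0") (auto simp: field_simps)
qed

lemma gen_poch2:
  assumes "gen c u n"
  shows "c + of_nat n \<noteq> 0" "pochhammer (c + of_nat n) n \<noteq> 0"
    "\<And>k. k \<le> n \<Longrightarrow> c + of_nat n + of_nat k \<noteq> 0"
    "\<And>k. k \<le> n \<Longrightarrow> pochhammer (c + 1 + of_nat n) k \<noteq> 0"
proof -
  have C: "\<And>j. j \<le> 2*n+2 \<Longrightarrow> c + of_nat j \<noteq> 0"
    using assms unfolding gen_def by auto
  show "c + of_nat n \<noteq> 0" using C[of n] by simp
  show "\<And>k. k \<le> n \<Longrightarrow> c + of_nat n + of_nat k \<noteq> 0" proof -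
    fix k assume "k \<le> n"
    then have "c + of_nat (n + k) \<noteq> 0" using C[of "n+k"] by simp
    then show "c + of_nat n + of_nat k \<noteq> 0" by (simp add: add.assoc)
  qed
  show "pochhammer (c + of_nat n) n \<noteq> 0"
  proof
    assume "pochhammer (c + of_nat n) n = 0"
    then obtain i where i: "i < n" "c + of_nat n = - of_nat i" by (auto simp: pochhammer_eq_0_iff)
    have "c + of_nat (n + i) = (c + of_nat n) + of_nat i" by simp
    also have "\<dots> = 0" using i by simp
    finally show False using C[of "n+i"] i by simp
  qed
  show "\<And>k. k \<le> n \<Longrightarrow> pochhammer (c + 1 + of_nat n) k \<noteq> 0"
  proof
    fix k assume k: "k \<le> n" and "pochhammer (c + 1 + of_nat n) k = 0"
    then obtain i where i: "i < k" "c + 1 + of_nat n = - of_nat i" by (auto simp: pochhammer_eq_0_iff)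
    have "c + of_nat (1 + n + i) = (c + 1 + of_nat n) + of_nat i" by simp
    also have "\<dots> = 0" using i by simp
    finally show False using C[of "1+n+i"] i k by simp
  qed
qed

lemma SS_generic:
  assumes g: "gen c u n"
  shows "SS c u n = CC c u n"
proof -
  note g2 = gen_poch2[OF g]
  have cn: "c + of_nat n \<noteq> 0" by (rule g2(1))
  have cn4: "c * 4 + of_nat n * 4 \<noteq> 0" using cn by (metis distrib_right mult_eq_0_iff zero_neq_numeral)
  have trm: "pochhammer (- of_nat n) k * pochhammer (c+1-u) k * pochhammer c k /
     (fact k * pochhammer u k * pochhammer (c + of_nat n) k) = tt c u n k * ((c + of_nat n + of_nat k) / (c + of_nat n))"
    if "k \<in> {0..n}" for k
  proof -
    have k: "k \<le> n" using that by simp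
    have e: "pochhammer (c + of_nat n) k * (c + of_nat n + of_nat k) = (c + of_nat n) * pochhammer (c + 1 + of_nat n) k"
      using poch_shift[of "c + of_nat n" k] by (simp add: algebra_simps)
    show ?thesis unfolding tt_def
      by (rule absT[OF e cn g2(3)[OF k] g2(4)[OF k]])
  qed
  have "SS c u n = (\<Sum>k=0..n. tt c u n k * ((c + of_nat n + of_nat k) / (c + of_nat n)))"
    unfolding SS_def by (rule sum.cong) (use trm in auto)
  also have "\<dots> = (\<Sum>k=0..n. (c + 2 * of_nat n) / 2 * tt c u n k + (1/2) * ((c + 2 * of_nat k) * tt c u n k)) / (c + of_nat n)"
    unfolding sum_divide_distrib by (rule sum.cong) (use cn cn4 in \<open>simp_all add: divide_simps algebra_simps\<close>)
  also have "\<dots> = ((c + 2 * of_nat n) * Dx c u n + Ex2 c u n) / (2 * (c + of_nat n))"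
    unfolding sum.distrib sum_distrib_left[symmetric] sumI[OF g] sumII[OF g] using cn by (simp add: field_simps)
  also have "\<dots> = CC c u n"
  proof -
    have pc: "pochhammer (c+1) n = pochhammer (1+c) n" by (simp add: add.commute)
    show ?thesis
    unfolding CC_def Dx_def Ex2_def pc
    by (rule absCC[OF polyA[of c n] polyB[of c n, unfolded pc] gen_poch(1)[OF g] gen_poch(2)[OF g] gen_poch(3)[OF g] g2(2) cn])
  qed
  finally show ?thesis .
qed



lemma isCont_poch_comp [continuous_intros]: "isCont f a \<Longrightarrow> isCont (\<lambda>z. pochhammer (f z :: complex) k) a"
  by (rule isCont_o2[OF _ isCont_pochhammer])

lemma SS_CC:
  assumes pu: "pochhammer u n \<noteq> 0" and pc: "pochhammer (c + of_nat n) n \<noteq> 0"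
  shows "SS c u n = CC c u n"
proof -
  define f where "f z = SS z u n - CC z u n" for z
  define B where "B = (\<lambda>j. - of_nat j :: complex) ` {..2*n+2}"
  have finB: "finite B" unfolding B_def by simp
  have U: "\<And>j. j < n \<Longrightarrow> u + of_nat j \<noteq> 0" using pu by (auto simp: pochhammer_eq_0_iff eq_neg_iff_add_eq_0)
  have f0: "f z = 0" if "z \<notin> B" for z
  proof -
    have "gen z u n" unfolding gen_def
    proof (intro conjI allI impI)
      fix j assume "j \<le> 2*n+2"
      then have "- of_nat j \<in> B" unfolding B_def by auto
      then show "z + of_nat j \<noteq> 0" using that by (auto simp: add_eq_0_iff)
    next
      fix j assume "j < n" then show "u + of_nat j \<noteq> 0" by (rule U)
    qed
    then show ?thesis unfolding f_def using SS_generic by simp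
  qed
  have pck: "pochhammer (c + of_nat n) k \<noteq> 0" if "k \<le> n" for k
    using pochhammer_neq_0_mono[OF pc that] .
  have cont: "isCont f c"
    unfolding f_def SS_def CC_def
    apply (intro continuous_intros)
    using pu pc pck pochhammer_neq_0_mono[OF pu] by auto
  have ev: "eventually (\<lambda>z. f z = 0) (at c)"
  proof -
    have op: "open (- (B - {c}))" using finB by (intro open_Compl finite_imp_closed) simp
    have "eventually (\<lambda>z. z \<in> - (B - {c})) (nhds c)"
      by (rule eventually_nhds_in_open[OF op]) simp
    then have "eventually (\<lambda>z. z \<noteq> c \<longrightarrow> z \<noteq> c \<and> z \<in> - (B - {c})) (nhds c)"
      by (rule eventually_mono) auto
    then have "eventually (\<lambda>z. z \<noteq> c \<and> z \<in> - (B - {c})) (at c)"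
      by (simp add: eventually_at_filter)
    then show ?thesis
      by (rule eventually_mono) (use f0 in auto)
  qed
  have "(f \<longlongrightarrow> f c) (at c)" using cont by (simp add: isCont_def)
  moreover have "(f \<longlongrightarrow> 0) (at c)" using ev by (rule tendsto_eventually)
  ultimately have "f c = 0" by (rule tendsto_unique[rotated]) simp
  then show ?thesis unfolding f_def by simp
qed



definition logder :: "(complex \<Rightarrow> complex) \<Rightarrow> complex \<Rightarrow> bool" where
  "logder f s \<longleftrightarrow> (f has_field_derivative f 0 * s) (at 0)"

lemma logder_const: "logder (\<lambda>e. a) 0"
  unfolding logder_def by simp

lemma logder_mult: "logder f s \<Longrightarrow> logder g t \<Longrightarrow> logder (\<lambda>e. f e * g e) (s + t)"
  unfolding logder_def by (drule (1) DERIV_mult) (simp add: algebra_simps)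

lemma logder_div:
  assumes "logder f s" "logder g t" "g 0 \<noteq> 0" shows "logder (\<lambda>e. f e / g e) (s - t)"
proof -
  have d: "((\<lambda>e. f e / g e) has_field_derivative (f 0 * s * g 0 - f 0 * (g 0 * t)) / (g 0 * g 0)) (at 0)"
    using assms unfolding logder_def by (intro DERIV_divide) auto
  have "(f 0 * s * g 0 - f 0 * (g 0 * t)) / (g 0 * g 0) = f 0 / g 0 * (s - t)"
    using assms(3) by (simp add: field_simps)
  then show ?thesis unfolding logder_def using d by simp
qed

lemma logder_poch:
  assumes "\<And>i. i < k \<Longrightarrow> a + of_nat i \<noteq> 0"
  shows "logder (\<lambda>e. pochhammer (a + b * e) k) (b * (\<Sum>i<k. 1 / (a + of_nat i)))"
  using assms
proof (induction k)
  case 0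
  then show ?case unfolding logder_def by simp
next
  case (Suc k)
  have IH: "logder (\<lambda>e. pochhammer (a + b * e) k) (b * (\<Sum>i<k. 1 / (a + of_nat i)))"
    using Suc by auto
  have nz: "a + of_nat k \<noteq> 0" using Suc.prems by auto
  have l2: "logder (\<lambda>e. a + b * e + of_nat k) (b / (a + of_nat k))"
    unfolding logder_def using nz
    by (auto intro!: derivative_eq_intros simp: field_simps)
  have "logder (\<lambda>e. pochhammer (a + b * e) k * (a + b * e + of_nat k)) (b * (\<Sum>i<k. 1 / (a + of_nat i)) + b / (a + of_nat k))"
    by (rule logder_mult[OF IH l2])
  moreover have "b * (\<Sum>i<k. 1 / (a + of_nat i)) + b / (a + of_nat k) = b * (\<Sum>i<Suc k. 1 / (a + of_nat i))"
    by (simp add: algebra_simps)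
  ultimately show ?case by (simp add: pochhammer_Suc)
qed



lemma gch: "(a + of_nat k) gchoose k = pochhammer (a + 1) k / fact k" for a :: complex
  by (simp add: gbinomial_pochhammer')

lemma sgn_choose: "(-1) ^ k * of_nat (n choose k) = pochhammer (- of_nat n :: complex) k / fact k"
proof -
  have "(-1) ^ k * of_nat (n choose k) = (-1) ^ k * ((-1) ^ k * pochhammer (- of_nat n :: complex) k / fact k)"
    by (simp add: binomial_gbinomial gbinomial_pochhammer)
  also have "\<dots> = ((-1) ^ k * (-1) ^ k) * pochhammer (- of_nat n :: complex) k / fact k" by (simp add: algebra_simps)
  also have "(-1) ^ k * (-1) ^ k = (1::complex)" by (simp add: power_mult_distrib[symmetric])
  finally show ?thesis by simp
qed

lemma half_inv: "(1/2) * (1 / (y/2 + c)) = 1 / (y + 2*c)" for y c :: complex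
proof (cases "y + 2*c = 0")
  case True
  then have "y/2 + c = 0" by (simp add: field_simps)
  with True show ?thesis by simp
next
  case False
  then have "y/2 + c \<noteq> 0" by (simp add: field_simps)
  with False show ?thesis by (simp add: field_simps)
qed

lemma H_Suc: "H (Suc m) y = H m y + 1 / (y + of_nat (Suc m))"
  unfolding H_def by simp

lemma H2k: "H (2*k) x = (1/2) * (\<Sum>i<k. 1 / (x/2 + 1 + of_nat i)) + (1/2) * (\<Sum>i<k. 1 / ((x+1)/2 + of_nat i))"
proof (induction k)
  case 0 then show ?case by (simp add: H_def)
next
  case (Suc k)
  have "H (2 * Suc k) x = H (2*k) x + 1 / (x + of_nat (Suc (2*k))) + 1 / (x + of_nat (Suc (Suc (2*k))))"
    by (simp add: H_Suc)
  moreover have "(1/2) * (1 / (x/2 + 1 + of_nat k)) = 1 / (x + of_nat (Suc (Suc (2*k))))"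
    using half_inv[of x "1 + of_nat k"] by (simp add: algebra_simps)
  moreover have "(1/2) * (1 / ((x+1)/2 + of_nat k)) = 1 / (x + of_nat (Suc (2*k)))"
    using half_inv[of "x+1" "of_nat k"] by (simp add: algebra_simps)
  ultimately show ?case using Suc.IH by (simp add: algebra_simps)
qed

lemma H_alt: "H m y = (\<Sum>i<m. 1 / (y + 1 + of_nat i))"
  unfolding H_def
proof (induction m)
  case 0 then show ?case by simp
next
  case (Suc m) then show ?case by (simp add: algebra_simps)
qed

lemma quarter_nz: "(1/4 + of_nat i :: complex) \<noteq> 0" "(-1/4 + of_nat i :: complex) \<noteq> 0"
proof -
  have g: "Re (1/4 + of_nat i :: complex) > 0" by simp
  show "(1/4 + of_nat i :: complex) \<noteq> 0"
  proof
    assume h: "(1/4 + of_nat i :: complex) = 0"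
    have "Re (1/4 + of_nat i :: complex) = 0" by (simp only: h zero_complex.sel(1))
    with g show False by simp
  qed
  show "(-1/4 + of_nat i :: complex) \<noteq> 0"
  proof (cases i)
    case 0 then show ?thesis by simp
  next
    case (Suc j)
    have g: "Re (-1/4 + of_nat i :: complex) > 0" using Suc by simp
    show ?thesis
    proof
      assume h: "(-1/4 + of_nat i :: complex) = 0"
      have "Re (-1/4 + of_nat i :: complex) = 0" by (simp only: h zero_complex.sel(1))
      with g show False by simp
    qed
  qed
qed



theorem theorem4:
  fixes n :: nat and x :: complex
  assumes hx: "\<And>j. 1 \<le> j \<Longrightarrow> j \<le> 2 * n \<Longrightarrow> x + of_nat j \<noteq> 0"
    and hx2: "\<And>j. 1 \<le> j \<Longrightarrow> j \<le> n \<Longrightarrow> (x - 1) / 2 + of_nat j \<noteq> 0"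
    and hd1: "\<And>k. k \<le> n \<Longrightarrow> ((x - 1) / 2 + of_nat k) gchoose k \<noteq> 0"
    and hd2: "\<And>k. k \<le> n \<Longrightarrow> (x - 1 / 2 + of_nat n + of_nat k) gchoose k \<noteq> 0"
  shows "(\<Sum>k=0..n. (-1) ^ k * of_nat (n choose k) *
            (((x / 2 + of_nat k) gchoose k) * ((x - 1 / 2 + of_nat k) gchoose k)) /
            ((((x - 1) / 2 + of_nat k) gchoose k) * ((x - 1 / 2 + of_nat n + of_nat k) gchoose k))
            * H (2 * k) x)
       = 4 powi (int n - 1) *
           (((x / 2 - 1 / 4 + of_nat n) gchoose n) * ((- 3 / 4 + of_nat n) gchoose n)) /
           ((((x - 1) / 2 + of_nat n) gchoose n) * ((x - 1 / 2 + 2 * of_nat n) gchoose n))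
           * (H n ((x - 1) / 2) - H n (- 3 / 4))
       + 4 powi (int n - 1) *
           (((x / 2 - 3 / 4 + of_nat n) gchoose n) * ((- 5 / 4 + of_nat n) gchoose n)) /
           ((((x - 1) / 2 + of_nat n) gchoose n) * ((x - 1 / 2 + 2 * of_nat n) gchoose n))
           * (H n ((x - 1) / 2) - H n (- 5 / 4))"
proof -
  define A0 where "A0 = x/2 + 1"
  define C0 where "C0 = x + 1/2"
  define U0 where "U0 = (x+1)/2"
  define D0 where "D0 = x + 1/2 + of_nat n"
  define P1 where "P1 = pochhammer (x/2 + 3/4) n"
  define P2 where "P2 = pochhammer (x/2 + 1/4) n"
  define Tf where "Tf e k = pochhammer (- of_nat n) k * pochhammer (A0 + (1/2) * e) k * pochhammer C0 k /
      (fact k * pochhammer (U0 + (-1/2) * e) k * pochhammer D0 k)" for e k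
  define Cf1 where "Cf1 e = 4^n/2 * P1 * pochhammer (1/4 + (-1/2) * e) n / (pochhammer (U0 + (-1/2) * e) n * pochhammer D0 n)" for e
  define Cf2 where "Cf2 e = 4^n/2 * P2 * pochhammer (-1/4 + (-1/2) * e) n / (pochhammer (U0 + (-1/2) * e) n * pochhammer D0 n)" for e
  define SA where "SA k = (\<Sum>i<k. 1 / (A0 + of_nat i))" for k
  define SU where "SU k = (\<Sum>i<k. 1 / (U0 + of_nat i))" for k
  define S1 where "S1 = (\<Sum>i<n. 1 / (1/4 + of_nat i :: complex))"
  define S2 where "S2 = (\<Sum>i<n. 1 / (-1/4 + of_nat i :: complex))"

  have pU: "pochhammer U0 k \<noteq> 0" if "k \<le> n" for k
  proof -
    have "((x - 1) / 2 + of_nat k) gchoose k = pochhammer ((x-1)/2 + 1) k / fact k" by (rule gch)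
    moreover have "(x-1)/2 + 1 = U0" unfolding U0_def by (simp add: field_simps)
    ultimately show ?thesis using hd1[OF that] by auto
  qed
  have pD: "pochhammer D0 k \<noteq> 0" if "k \<le> n" for k
  proof -
    have "(x - 1/2 + of_nat n + of_nat k) gchoose k = pochhammer (x - 1/2 + of_nat n + 1) k / fact k" by (rule gch)
    moreover have "x - 1/2 + of_nat n + 1 = D0" unfolding D0_def by (simp add: field_simps)
    ultimately show ?thesis using hd2[OF that] by auto
  qed
  have Ai: "A0 + of_nat i \<noteq> 0" if "i < n" for i
  proof -
    have e: "A0 + of_nat i = (x + of_nat (2 + 2*i)) / 2" unfolding A0_def by (simp add: field_simps)
    have "x + of_nat (2 + 2*i) \<noteq> 0" using hx[of "2+2*i"] that by simp
    then show ?thesis by (subst e) simp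
  qed
  have Ui: "U0 + of_nat i \<noteq> 0" if "i < n" for i
    using pU[of n] that by (auto simp: pochhammer_eq_0_iff eq_neg_iff_add_eq_0)

  have F1: "SS C0 (U0 + (-1/2) * e) n = (\<Sum>k=0..n. Tf e k)" for e
  proof -
    have a1: "C0 + 1 - (U0 + (-1/2) * e) = A0 + (1/2) * e" unfolding C0_def U0_def A0_def by (simp add: field_simps)
    have a2: "C0 + of_nat n = D0" unfolding C0_def D0_def by simp
    show ?thesis unfolding SS_def Tf_def a1 a2 ..
  qed
  have F2: "CC C0 (U0 + (-1/2) * e) n = Cf1 e + Cf2 e" for e
  proof -
    have a1: "C0/2 + 1/2 = x/2 + 3/4" unfolding C0_def by (simp add: field_simps)
    have a2: "U0 + (-1/2) * e - C0/2 = 1/4 + (-1/2) * e" unfolding C0_def U0_def by (simp add: field_simps)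
    have a3: "1/4 + (-1/2) * e - 1/2 = -1/4 + (-1/2) * (e::complex)" by (simp add: field_simps)
    have a4: "C0/2 = x/2 + 1/4" unfolding C0_def by (simp add: field_simps)
    have a5: "C0 + of_nat n = D0" unfolding C0_def D0_def by simp
    show ?thesis unfolding CC_def a1 a2 unfolding a3 a4 a5 Cf1_def Cf2_def P1_def P2_def
      by (simp only: add_divide_distrib distrib_left mult.assoc)
  qed
  have fam: "eventually (\<lambda>e. (\<Sum>k=0..n. Tf e k) = Cf1 e + Cf2 e) (nhds 0)"
  proof -
    define g where "g e = pochhammer (U0 + (-1/2) * e) n" for e
    have "isCont g 0" unfolding g_def by (intro continuous_intros)
    then have "(g \<longlongrightarrow> g 0) (nhds 0)" unfolding isCont_def tendsto_at_iff_tendsto_nhds .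
    then have "((\<lambda>e. pochhammer (U0 + (-1/2) * e) n) \<longlongrightarrow> pochhammer (U0 + (-1/2) * 0) n) (nhds 0)"
      unfolding g_def .
    then have "eventually (\<lambda>e. pochhammer (U0 + (-1/2) * e) n \<noteq> 0) (nhds 0)"
      by (rule tendsto_imp_eventually_ne) (use pU[of n] in simp)
    then show ?thesis
    proof (rule eventually_mono)
      fix e assume "pochhammer (U0 + (-1/2) * e) n \<noteq> 0"
      moreover have "pochhammer (C0 + of_nat n) n \<noteq> 0" using pD[of n] unfolding C0_def D0_def by simp
      ultimately have "SS C0 (U0 + (-1/2) * e) n = CC C0 (U0 + (-1/2) * e) n" by (rule SS_CC)
      then show "(\<Sum>k=0..n. Tf e k) = Cf1 e + Cf2 e" unfolding F1 F2 .
    qed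
  qed
  have d1k: "((\<lambda>e. Tf e k) has_field_derivative Tf 0 k * H (2*k) x) (at 0)" if "k \<in> {0..n}" for k
  proof -
    have kn: "k \<le> n" using that by simp
    have lA: "logder (\<lambda>e. pochhammer (A0 + (1/2) * e) k) ((1/2) * SA k)"
      unfolding SA_def by (rule logder_poch) (use Ai kn in auto)
    have lU: "logder (\<lambda>e. pochhammer (U0 + (-1/2) * e) k) ((-1/2) * SU k)"
      unfolding SU_def by (rule logder_poch) (use Ui kn in auto)
    have nz: "fact k * pochhammer (U0 + (-1/2) * 0) k * pochhammer D0 k \<noteq> 0"
      using pU[OF kn] pD[OF kn] by simp
    have l: "logder (\<lambda>e. Tf e k) ((0 + (1/2) * SA k + 0) - (0 + (-1/2) * SU k + 0))"
      unfolding Tf_def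
      by (rule logder_div[OF logder_mult[OF logder_mult[OF logder_const lA] logder_const]
                             logder_mult[OF logder_mult[OF logder_const lU] logder_const] nz])
    have "(0 + (1/2) * SA k + 0) - (0 + (-1/2) * SU k + 0) = H (2*k) x"
      unfolding H2k SA_def SU_def A0_def U0_def by simp
    then show ?thesis using l unfolding logder_def by simp
  qed
  have d1: "((\<lambda>e. \<Sum>k=0..n. Tf e k) has_field_derivative (\<Sum>k=0..n. Tf 0 k * H (2*k) x)) (at 0)"
    by (rule DERIV_sum) (rule d1k)
  have d2: "((\<lambda>e. Cf1 e + Cf2 e) has_field_derivative
       Cf1 0 * ((-1/2) * S1 - (-1/2) * SU n) + Cf2 0 * ((-1/2) * S2 - (-1/2) * SU n)) (at 0)"
  proof -
    have lU: "logder (\<lambda>e. pochhammer (U0 + (-1/2) * e) n) ((-1/2) * SU n)"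
      unfolding SU_def by (rule logder_poch) (use Ui in auto)
    have l1: "logder (\<lambda>e. pochhammer (1/4 + (-1/2) * e) n) ((-1/2) * S1)"
      unfolding S1_def by (rule logder_poch) (use quarter_nz in auto)
    have l2: "logder (\<lambda>e. pochhammer (-1/4 + (-1/2) * e) n) ((-1/2) * S2)"
      unfolding S2_def by (rule logder_poch) (use quarter_nz in auto)
    have nz: "pochhammer (U0 + (-1/2) * 0) n * pochhammer D0 n \<noteq> 0"
      using pU[of n] pD[of n] by simp
    have c1: "logder Cf1 ((0 + (-1/2) * S1) - ((-1/2) * SU n + 0))"
      unfolding Cf1_def[abs_def]
      by (rule logder_div[OF logder_mult[OF logder_const l1] logder_mult[OF lU logder_const] nz])
    have c2: "logder Cf2 ((0 + (-1/2) * S2) - ((-1/2) * SU n + 0))"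
      unfolding Cf2_def[abs_def]
      by (rule logder_div[OF logder_mult[OF logder_const l2] logder_mult[OF lU logder_const] nz])
    have "((\<lambda>e. Cf1 e + Cf2 e) has_field_derivative
       Cf1 0 * ((0 + (-1/2) * S1) - ((-1/2) * SU n + 0)) + Cf2 0 * ((0 + (-1/2) * S2) - ((-1/2) * SU n + 0))) (at 0)"
      using c1 c2 unfolding logder_def by (rule DERIV_add)
    then show ?thesis by simp
  qed
  have eqd: "(\<Sum>k=0..n. Tf 0 k * H (2*k) x) = Cf1 0 * ((-1/2) * S1 - (-1/2) * SU n) + Cf2 0 * ((-1/2) * S2 - (-1/2) * SU n)"
  proof -
    have "((\<lambda>e. Cf1 e + Cf2 e) has_field_derivative (\<Sum>k=0..n. Tf 0 k * H (2*k) x)) (at 0)"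
      using d1 by (subst (asm) DERIV_cong_ev[OF refl fam refl])
    then show ?thesis using d2 by (rule DERIV_unique)
  qed
  have lhs: "(\<Sum>k=0..n. (-1) ^ k * of_nat (n choose k) *
            (((x / 2 + of_nat k) gchoose k) * ((x - 1 / 2 + of_nat k) gchoose k)) /
            ((((x - 1) / 2 + of_nat k) gchoose k) * ((x - 1 / 2 + of_nat n + of_nat k) gchoose k))
            * H (2 * k) x) = (\<Sum>k=0..n. Tf 0 k * H (2*k) x)"
  proof (rule sum.cong[OF refl])
    fix k assume "k \<in> {0..n}"
    then have kn: "k \<le> n" by simp
    have eA: "x/2 + 1 = A0" unfolding A0_def ..
    have eC: "x - 1/2 + 1 = C0" unfolding C0_def by (simp add: field_simps)
    have eU: "(x-1)/2 + 1 = U0" unfolding U0_def by (simp add: field_simps)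
    have eD: "x - 1/2 + of_nat n + 1 = D0" unfolding D0_def by (simp add: field_simps)
    have g1: "(x/2 + of_nat k) gchoose k = pochhammer A0 k / fact k" using gch[of "x/2" k] unfolding eA .
    have g2: "(x - 1/2 + of_nat k) gchoose k = pochhammer C0 k / fact k" using gch[of "x - 1/2" k] unfolding eC .
    have g3: "((x-1)/2 + of_nat k) gchoose k = pochhammer U0 k / fact k" using gch[of "(x-1)/2" k] unfolding eU .
    have g4: "(x - 1/2 + of_nat n + of_nat k) gchoose k = pochhammer D0 k / fact k" using gch[of "x - 1/2 + of_nat n" k] unfolding eD .
    have t0: "Tf 0 k = pochhammer (- of_nat n) k * pochhammer A0 k * pochhammer C0 k / (fact k * pochhammer U0 k * pochhammer D0 k)"
      unfolding Tf_def by simp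
    have F: "(fact k :: complex) \<noteq> 0" by simp
    show "(-1) ^ k * of_nat (n choose k) *
            (((x / 2 + of_nat k) gchoose k) * ((x - 1 / 2 + of_nat k) gchoose k)) /
            ((((x - 1) / 2 + of_nat k) gchoose k) * ((x - 1 / 2 + of_nat n + of_nat k) gchoose k))
            * H (2 * k) x = Tf 0 k * H (2*k) x"
      unfolding sgn_choose g1 g2 g3 g4 t0 using F pU[OF kn] pD[OF kn] by (simp add: field_simps)
  qed
  have rhs: "Cf1 0 * ((-1/2) * S1 - (-1/2) * SU n) + Cf2 0 * ((-1/2) * S2 - (-1/2) * SU n) =
       4 powi (int n - 1) *
           (((x / 2 - 1 / 4 + of_nat n) gchoose n) * ((- 3 / 4 + of_nat n) gchoose n)) /
           ((((x - 1) / 2 + of_nat n) gchoose n) * ((x - 1 / 2 + 2 * of_nat n) gchoose n))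
           * (H n ((x - 1) / 2) - H n (- 3 / 4))
       + 4 powi (int n - 1) *
           (((x / 2 - 3 / 4 + of_nat n) gchoose n) * ((- 5 / 4 + of_nat n) gchoose n)) /
           ((((x - 1) / 2 + of_nat n) gchoose n) * ((x - 1 / 2 + 2 * of_nat n) gchoose n))
           * (H n ((x - 1) / 2) - H n (- 5 / 4))"
  proof -
    have p4: "4 powi (int n - 1) = (4::complex)^n / 4"
      by (subst power_int_diff) simp_all
    have e1: "x/2 - 1/4 + 1 = x/2 + 3/4" by (simp add: field_simps)
    have e2: "-3/4 + 1 = (1/4::complex)" by simp
    have e3: "(x-1)/2 + 1 = U0" unfolding U0_def by (simp add: field_simps)
    have e4: "x - 1/2 + of_nat n + 1 = D0" unfolding D0_def by (simp add: field_simps)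
    have e5: "x/2 - 3/4 + 1 = x/2 + 1/4" by (simp add: field_simps)
    have e6: "-5/4 + 1 = (-1/4::complex)" by simp
    have e7: "x - 1/2 + 2 * of_nat n = (x - 1/2 + of_nat n) + of_nat n" by simp
    have g1: "(x/2 - 1/4 + of_nat n) gchoose n = P1 / fact n" using gch[of "x/2 - 1/4" n] unfolding e1 P1_def .
    have g2: "(-3/4 + of_nat n :: complex) gchoose n = pochhammer (1/4) n / fact n" using gch[of "-3/4" n] unfolding e2 .
    have g3: "((x-1)/2 + of_nat n) gchoose n = pochhammer U0 n / fact n" using gch[of "(x-1)/2" n] unfolding e3 .
    have g4: "(x - 1/2 + 2 * of_nat n) gchoose n = pochhammer D0 n / fact n" unfolding e7 using gch[of "x - 1/2 + of_nat n" n] unfolding e4 .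
    have g5: "(x/2 - 3/4 + of_nat n) gchoose n = P2 / fact n" using gch[of "x/2 - 3/4" n] unfolding e5 P2_def .
    have g6: "(-5/4 + of_nat n :: complex) gchoose n = pochhammer (-1/4) n / fact n" using gch[of "-5/4" n] unfolding e6 .
    have h1: "H n ((x-1)/2) = SU n" unfolding H_alt SU_def e3 ..
    have h2: "H n (-3/4) = S1" unfolding H_alt S1_def by simp
    have h3: "H n (-5/4) = S2" unfolding H_alt S2_def by simp
    have c1: "Cf1 0 = 4^n/2 * P1 * pochhammer (1/4) n / (pochhammer U0 n * pochhammer D0 n)" unfolding Cf1_def by simp
    have c2: "Cf2 0 = 4^n/2 * P2 * pochhammer (-1/4) n / (pochhammer U0 n * pochhammer D0 n)" unfolding Cf2_def by simp
    have F: "(fact n :: complex) \<noteq> 0" by simp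
    show ?thesis unfolding p4 g1 g2 g3 g4 g5 g6 h1 h2 h3 c1 c2
      using F pU[of n] pD[of n] by (simp add: field_simps)
  qed
  show ?thesis using lhs eqd rhs by simp
qed

end
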